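(* Let $n,d$ be positive integers and let $X = H Z$, where $H\in\mathbb{R}^{d\times n}$ is an unknown matrix of full column rank and $Z=(Z_1,\dots,Z_n)^\top$ is an unobserved random vector generated by the structural equations $Z_i = f_i(Z_{pa(i)}) + \mathcal{E}_i$, $i\in[n]$, with respect to an unknown directed acyclic graph $\mathcal{G}$ on $[n]$, where each $f_i$ is twice continuously differentiable and directionally non-linear, and $\mathcal{E}_1,\dots,\mathcal{E}_n$ are mutually independent with $\mathcal{E}_i\sim\mathcal{N}(0,\sigma_i^2)$. Then the latent variables $Z$ are identifiable up to upstream layers from the distribution $p_X$ of $X$ alone: it is possible to learn from $p_X$ a map $\hat Z:\mathbb{R}^d\to\mathbb{R}^n$ such that $\hat Z(X) = P_\pi\, C\, Z$ for all $Z\in\mathbb{R}^n$, where $P_\pi\in\mathbb{R}^{n\times n}$ is a permutation matrix and $C\in\mathbb{R}^{n\times n}$ is a constant matrix with non-zero diagonal entries and $C_{ij}=0$ whenever $i\in layer(k)$ and $j\in\bigcup_{l<k} layer(l)$.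
   Context: $pa(i)$ denotes the set of parents of node $i$ in $\mathcal{G}$ and $Z_{pa(i)}$ the corresponding subvector. A function $f_i:\mathbb{R}^{|pa(i)|}\to\mathbb{R}$ is directionally non-linear if there is no $\beta\in\mathbb{R}^{|pa(i)|}$ with $\|\beta\|_2=1$ such that the second directional derivative $\partial^2_{\beta,\beta} f_i(z)=0$ for all $z$. A leaf node is a node with no descendants in $\mathcal{G}$. For $k\ge 0$, $layer(k)$ is the set of nodes of $\mathcal{G}$ whose longest directed path to a leaf node has length $k$ (so $layer(0)$ is the set of leaves). Only samples of $X$ (equivalently, the distribution $p_X$) are available; no interventions. *)

theory Defs
  imports "HOL-Analysis.Analysis" "HOL-Probability.Probability"
begin

text \<open>Directed graphs on the index type 'n: an edge (j,i) means j \<rightarrow> i.\<close>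

definition parents :: "('n \<times> 'n) set \<Rightarrow> 'n \<Rightarrow> 'n set" where
  "parents G i = {j. (j, i) \<in> G}"

definition is_leaf :: "('n \<times> 'n) set \<Rightarrow> 'n \<Rightarrow> bool" where
  "is_leaf G v \<longleftrightarrow> (\<forall>w. (v, w) \<notin> G)"

definition path_to_leaf :: "('n \<times> 'n) set \<Rightarrow> 'n \<Rightarrow> nat \<Rightarrow> bool" where
  "path_to_leaf G i k \<longleftrightarrow>
     (\<exists>p :: nat \<Rightarrow> 'n. p 0 = i \<and> (\<forall>m<k. (p m, p (Suc m)) \<in> G) \<and> is_leaf G (p k))"

definition layer :: "('n \<times> 'n) set \<Rightarrow> nat \<Rightarrow> 'n set" where
  "layer G k = {i. path_to_leaf G i k \<and> (\<forall>m. path_to_leaf G i m \<longrightarrow> m \<le> k)}"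

definition depends_only_on :: "(real^'n \<Rightarrow> real) \<Rightarrow> 'n set \<Rightarrow> bool" where
  "depends_only_on g S \<longleftrightarrow> (\<forall>z z'. (\<forall>j\<in>S. z $ j = z' $ j) \<longrightarrow> g z = g z')"

definition C2 :: "(real^'n \<Rightarrow> real) \<Rightarrow> bool" where
  "C2 g \<longleftrightarrow> (\<exists>(Dg :: (real^'n) \<Rightarrow> ((real^'n) \<Rightarrow>\<^sub>L real))
                 (D2g :: (real^'n) \<Rightarrow> ((real^'n) \<Rightarrow>\<^sub>L ((real^'n) \<Rightarrow>\<^sub>L real))).
      (\<forall>z. (g has_derivative blinfun_apply (Dg z)) (at z)) \<and>
      (\<forall>z. (Dg has_derivative blinfun_apply (D2g z)) (at z)) \<and>
      continuous_on UNIV D2g)"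

definition dir2 :: "(real^'n \<Rightarrow> real) \<Rightarrow> real^'n \<Rightarrow> real^'n \<Rightarrow> real" where
  "dir2 g \<beta> z = deriv (\<lambda>t. deriv (\<lambda>s. g (z + s *\<^sub>R \<beta>)) t) 0"

text \<open>Directional non-linearity of f_i viewed as a function of Z_{pa(i)}:
  directions \<beta> live in R^{|pa(i)|}, i.e. are supported on the parent coordinates.\<close>
definition dir_nonlinear :: "(real^'n \<Rightarrow> real) \<Rightarrow> 'n set \<Rightarrow> bool" where
  "dir_nonlinear g S \<longleftrightarrow>
     \<not> (\<exists>\<beta>. norm \<beta> = 1 \<and> (\<forall>j. j \<notin> S \<longrightarrow> \<beta> $ j = 0) \<and> (\<forall>z. dir2 g \<beta> z = 0))"

definition sem_solve :: "('n \<Rightarrow> real^'n \<Rightarrow> real) \<Rightarrow> real^'n \<Rightarrow> real^'n" where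
  "sem_solve f e = (THE z. \<forall>i. z $ i = f i z + e $ i)"

definition noise_measure :: "('n::finite \<Rightarrow> real) \<Rightarrow> (real^'n) measure" where
  "noise_measure \<sigma> = density lborel (\<lambda>e. \<Prod>i\<in>UNIV. ennreal (normal_density 0 (\<sigma> i) (e $ i)))"

definition obs_dist :: "real^'n^'d \<Rightarrow> ('n::finite \<Rightarrow> real^'n \<Rightarrow> real) \<Rightarrow> ('n \<Rightarrow> real)
     \<Rightarrow> (real^'d) measure" where
  "obs_dist H f \<sigma> = distr (noise_measure \<sigma>) borel (\<lambda>e. H *v sem_solve f e)"

definition valid_model :: "real^'n^'d \<Rightarrow> ('n::finite \<times> 'n) set \<Rightarrow> ('n \<Rightarrow> real^'n \<Rightarrow> real)
     \<Rightarrow> ('n \<Rightarrow> real) \<Rightarrow> bool" where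
  "valid_model H G f \<sigma> \<longleftrightarrow>
     rank H = CARD('n) \<and> acyclic G \<and>
     (\<forall>i. depends_only_on (f i) (parents G i) \<and> C2 (f i) \<and> dir_nonlinear (f i) (parents G i)) \<and>
     (\<forall>i. \<sigma> i > 0)"

definition perm_matrix :: "('n::finite \<Rightarrow> 'n) \<Rightarrow> real^'n^'n" where
  "perm_matrix \<pi> = (\<chi> i j. if j = \<pi> i then 1 else 0)"

end

theory Submission
  imports Defs
begin



definition lay :: "('n \<times> 'n) set \<Rightarrow> 'n \<Rightarrow> nat" where
  "lay G i = (GREATEST k. path_to_leaf G i k)"

lemma walk_trancl:
  assumes "\<forall>m<k. (p m, p (Suc m)) \<in> G" "a < b" "b \<le> k"
  shows "(p a, p b) \<in> G\<^sup>+"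
  using assms(2,3)
proof (induction b)
  case 0 then show ?case by simp
next
  case (Suc b)
  have e: "(p b, p (Suc b)) \<in> G" using assms(1) Suc.prems by auto
  show ?case
  proof (cases "a = b")
    case True then show ?thesis using e by auto
  next
    case False
    then have "(p a, p b) \<in> G\<^sup>+" using Suc by auto
    then show ?thesis using e by (meson trancl.trancl_into_trancl)
  qed
qed

lemma walk_bound:
  fixes G :: "('n::finite \<times> 'n) set"
  assumes ac: "acyclic G" and w: "\<forall>m<k. (p m, p (Suc m)) \<in> G"
  shows "k < CARD('n)"
proof (rule ccontr)
  assume "\<not> k < CARD('n)"
  then have "card (UNIV::'n set) < card {0..k}" by simp
  moreover have "p ` {0..k} \<subseteq> UNIV" by simp
  ultimately have "\<not> inj_on p {0..k}"
    by (metis card_inj_on_le finite not_le)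
  then obtain a b where ab: "a \<in> {0..k}" "b \<in> {0..k}" "a \<noteq> b" "p a = p b"
    unfolding inj_on_def by blast
  then consider "a < b" | "b < a" by linarith
  then show False
  proof cases
    case 1
    then have "(p a, p b) \<in> G\<^sup>+" using walk_trancl[OF w 1] ab by auto
    then show False using ac ab unfolding acyclic_def by auto
  next
    case 2
    then have "(p b, p a) \<in> G\<^sup>+" using walk_trancl[OF w 2] ab by auto
    then show False using ac ab unfolding acyclic_def by auto
  qed
qed

lemma path_bound:
  fixes G :: "('n::finite \<times> 'n) set"
  assumes "acyclic G" "path_to_leaf G i k"
  shows "k < CARD('n)"
  using assms walk_bound unfolding path_to_leaf_def by blast

lemma path_exists:
  fixes G :: "('n::finite \<times> 'n) set"
  assumes ac: "acyclic G"
  shows "\<exists>k. path_to_leaf G i k"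
proof -
  have wf: "wf (G\<inverse>)"
    using ac by (simp add: finite_acyclic_wf_converse)
  show ?thesis
  proof (induction i rule: wf_induct[OF wf])
    case (1 x)
    show ?case
    proof (cases "is_leaf G x")
      case True
      then have "path_to_leaf G x 0" unfolding path_to_leaf_def by (intro exI[of _ "\<lambda>_. x"]) auto
      then show ?thesis by blast
    next
      case False
      then obtain w where w: "(x, w) \<in> G" unfolding is_leaf_def by auto
      then obtain k where "path_to_leaf G w k" using 1 by auto
      then obtain q where q: "q 0 = w" "\<forall>m<k. (q m, q (Suc m)) \<in> G" "is_leaf G (q k)"
        unfolding path_to_leaf_def by auto
      define p where "p = (\<lambda>m. if m = 0 then x else q (m - 1))"
      have "\<forall>m<Suc k. (p m, p (Suc m)) \<in> G"
      proof (intro allI impI)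
        fix m assume "m < Suc k"
        then show "(p m, p (Suc m)) \<in> G"
          using q w by (cases m) (auto simp: p_def)
      qed
      moreover have "p 0 = x" "is_leaf G (p (Suc k))" using q by (auto simp: p_def)
      ultimately have "path_to_leaf G x (Suc k)" unfolding path_to_leaf_def by blast
      then show ?thesis by blast
    qed
  qed
qed

lemma lay_path:
  fixes G :: "('n::finite \<times> 'n) set"
  assumes "acyclic G"
  shows "path_to_leaf G i (lay G i)" "\<And>m. path_to_leaf G i m \<Longrightarrow> m \<le> lay G i"
proof -
  obtain k where k: "path_to_leaf G i k" using path_exists[OF assms] by blast
  have b: "\<forall>y. path_to_leaf G i y \<longrightarrow> y \<le> CARD('n)"
    using path_bound[OF assms] less_imp_le by blast
  show "path_to_leaf G i (lay G i)" unfolding lay_def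
    by (rule GreatestI_nat[where P="\<lambda>k. path_to_leaf G i k", OF k]) (use b in blast)
  show "\<And>m. path_to_leaf G i m \<Longrightarrow> m \<le> lay G i" unfolding lay_def
    by (rule Greatest_le_nat[where P="\<lambda>k. path_to_leaf G i k"]) (use b in blast)+
qed

lemma in_layer_iff:
  fixes G :: "('n::finite \<times> 'n) set"
  assumes "acyclic G"
  shows "i \<in> layer G k \<longleftrightarrow> lay G i = k"
  using lay_path[OF assms, of i] unfolding layer_def
  by (auto intro: le_antisym)

lemma lay_parent:
  fixes G :: "('n::finite \<times> 'n) set"
  assumes ac: "acyclic G" and e: "(j, i) \<in> G"
  shows "lay G i < lay G j"
proof -
  obtain q where q: "q 0 = i" "\<forall>m<lay G i. (q m, q (Suc m)) \<in> G" "is_leaf G (q (lay G i))"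
    using lay_path(1)[OF ac, of i] unfolding path_to_leaf_def by auto
  define p where "p = (\<lambda>m. if m = 0 then j else q (m - 1))"
  have "\<forall>m<Suc (lay G i). (p m, p (Suc m)) \<in> G"
  proof (intro allI impI)
    fix m assume "m < Suc (lay G i)"
    then show "(p m, p (Suc m)) \<in> G"
      using q e by (cases m) (auto simp: p_def)
  qed
  moreover have "p 0 = j" "is_leaf G (p (Suc (lay G i)))" using q by (auto simp: p_def)
  ultimately have "path_to_leaf G j (Suc (lay G i))" unfolding path_to_leaf_def by blast
  then show ?thesis using lay_path(2)[OF ac] by fastforce
qed

lemma lay_child:
  fixes G :: "('n::finite \<times> 'n) set"
  assumes ac: "acyclic G" and l: "lay G j = Suc m"
  shows "\<exists>i. (j, i) \<in> G \<and> lay G i = m"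
proof -
  obtain p where p: "p 0 = j" "\<forall>k<Suc m. (p k, p (Suc k)) \<in> G" "is_leaf G (p (Suc m))"
    using lay_path(1)[OF ac, of j] l unfolding path_to_leaf_def by auto
  have e: "(j, p 1) \<in> G" using p by auto
  have "path_to_leaf G (p 1) m"
    unfolding path_to_leaf_def using p by (intro exI[of _ "\<lambda>k. p (Suc k)"]) auto
  then have "m \<le> lay G (p 1)" using lay_path(2)[OF ac] by blast
  moreover have "lay G (p 1) < Suc m" using lay_parent[OF ac e] l by simp
  ultimately show ?thesis using e by (intro exI[of _ "p 1"]) auto
qed




typedef 'a oc = "UNIV :: 'a set" by auto

definition enc :: "'a::finite \<Rightarrow> nat" where "enc = (SOME g. inj g)"

lemma inj_enc: "inj (enc :: 'a::finite \<Rightarrow> nat)"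
proof -
  obtain f :: "'a \<Rightarrow> nat" and n where "f ` UNIV = {..<n}" "inj_on f UNIV"
    using finite_imp_inj_to_nat_seg[of "UNIV :: 'a set"] by auto
  then have "\<exists>g::'a \<Rightarrow> nat. inj g" by blast
  then show ?thesis unfolding enc_def by (rule someI_ex)
qed

instantiation oc :: (finite) linorder
begin
definition less_eq_oc :: "'a oc \<Rightarrow> 'a oc \<Rightarrow> bool" where
  "less_eq_oc x y \<longleftrightarrow> enc (Rep_oc x) \<le> enc (Rep_oc y)"
definition less_oc :: "'a oc \<Rightarrow> 'a oc \<Rightarrow> bool" where
  "less_oc x y \<longleftrightarrow> enc (Rep_oc x) < enc (Rep_oc y)"
instance
proof
  fix x y :: "'a oc"
  show "x \<le> y \<Longrightarrow> y \<le> x \<Longrightarrow> x = y"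
    unfolding less_eq_oc_def using inj_enc[where 'a='a]
    by (metis Rep_oc_inject antisym injD)
qed (auto simp: less_eq_oc_def less_oc_def)
end

instance oc :: (finite) finite
proof
  have "UNIV = Abs_oc ` (UNIV :: 'a set)"
    by (metis Abs_oc_cases surj_def)
  then show "finite (UNIV :: 'a oc set)" by (metis finite finite_imageI)
qed

instance oc :: (finite) wellorder
proof
  fix P :: "'a oc \<Rightarrow> bool" and a
  assume H: "\<And>x. (\<And>y. y < x \<Longrightarrow> P y) \<Longrightarrow> P x"
  have "\<forall>x. enc (Rep_oc x) = k \<longrightarrow> P x" for k
  proof (induction k rule: less_induct)
    case (less k)
    then show ?case using H unfolding less_oc_def by blast
  qed
  then show "P a" by blast
qed

definition RR :: "real^'n \<Rightarrow> real^('n oc)" where "RR z = (\<chi> a. z $ Rep_oc a)"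
definition RI :: "real^('n oc) \<Rightarrow> real^'n" where "RI w = (\<chi> i. w $ Abs_oc i)"

lemma RR_RI[simp]: "RR (RI w) = w" and RI_RR[simp]: "RI (RR z) = z"
  by (auto simp: RR_def RI_def vec_eq_iff Rep_oc_inverse Abs_oc_inverse)

lemma linear_RR: "linear RR" and linear_RI: "linear RI"
  by (auto intro!: linearI simp: RR_def RI_def vec_eq_iff)

lemma prod_Basis_cart: "(\<Prod>b\<in>Basis. (u - l) \<bullet> b) = (\<Prod>i\<in>UNIV. u$i - l$i)"
  for u l :: "real^'n::finite"
proof -
  have B: "Basis = range (\<lambda>i. axis i (1::real) :: real^'n)"
    by (auto simp: Basis_vec_def)
  have inj: "inj (\<lambda>i. axis i (1::real) :: real^'n)"
    by (auto simp: inj_def axis_eq_axis)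
  have "(\<Prod>b\<in>Basis. (u - l) \<bullet> b) = (\<Prod>b\<in>range (\<lambda>i. axis i (1::real) :: real^'n). (u - l) \<bullet> b)"
    using B by simp
  also have "\<dots> = (\<Prod>i\<in>UNIV. (u - l) \<bullet> axis i 1)"
    using prod.reindex[OF inj, of "\<lambda>b. (u-l)\<bullet>b"] by (simp add: o_def)
  finally show ?thesis by (simp add: inner_axis)
qed

lemma lborel_RI: "distr lborel borel RI = (lborel :: (real^'n::finite) measure)"
proof (rule lborel_eqI[symmetric])
  fix l u :: "real^'n"
  assume le: "\<And>b. b \<in> Basis \<Longrightarrow> l \<bullet> b \<le> u \<bullet> b"
  then have le': "\<forall>i. l$i \<le> u$i"
    by (metis axis_in_Basis_iff cart_eq_inner_axis Basis_real_def insertI1)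
  have meas: "RI \<in> borel_measurable (lborel :: (real^'n oc) measure)"
    unfolding measurable_lborel2
    using linear_RI by (intro borel_measurable_continuous_onI linear_continuous_on linear_conv_bounded_linear[THEN iffD1])
  have pre: "RI -` box l u = box (RR l) (RR u)"
    by (auto simp: mem_box_cart RR_def RI_def Abs_oc_inverse Rep_oc_inverse)
       (metis Abs_oc_inverse Rep_oc_inverse UNIV_I)+
  have "emeasure (distr lborel borel RI) (box l u) = emeasure lborel (box (RR l) (RR u))"
    using meas by (simp add: emeasure_distr pre)
  also have "\<dots> = (\<Prod>a\<in>UNIV. (RR u)$a - (RR l)$a)"
  proof -
    have "\<forall>b\<in>Basis. RR l \<bullet> b \<le> RR u \<bullet> b"
      using le' by (auto simp: Basis_vec_def inner_axis RR_def)
    then show ?thesis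
      using le' by (simp add: emeasure_lborel_box_eq prod_Basis_cart RR_def prod_nonneg)
  qed
  also have "\<dots> = (\<Prod>i\<in>UNIV. u$i - l$i)"
  proof -
    have r: "range Rep_oc = (UNIV :: 'n set)"
      by (metis Abs_oc_inverse UNIV_I surjI)
    have inj: "inj (Rep_oc :: 'n oc \<Rightarrow> 'n)" by (simp add: Rep_oc_inject inj_def)
    have "(\<Prod>i\<in>UNIV. u$i - l$i) = (\<Prod>i\<in>range (Rep_oc :: 'n oc \<Rightarrow> 'n). u$i - l$i)"
      using r by simp
    also have "\<dots> = (\<Prod>a\<in>UNIV. u$Rep_oc a - l$Rep_oc a)"
      using prod.reindex[OF inj, of "\<lambda>i. u$i - l$i"] by (simp add: o_def)
    finally show ?thesis by (simp add: RR_def)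
  qed
  finally show "emeasure (distr lborel borel RI) (box l u) = (\<Prod>b\<in>Basis. (u - l) \<bullet> b)"
    by (simp add: prod_Basis_cart)
qed simp




lemma cv_ord:
  fixes T S :: "real^'k::{finite,wellorder} \<Rightarrow> real^'k::_" and T' :: "real^'k::_ \<Rightarrow> real^'k::_ \<Rightarrow> real^'k::_"
  assumes ST: "\<And>x. S (T x) = x" and TS: "\<And>y. T (S y) = y"
    and contS: "continuous_on UNIV S"
    and der: "\<And>x. (T has_derivative T' x) (at x)"
    and detc: "\<And>x. \<bar>det (matrix (T' x))\<bar> = c" and c: "c > 0"
  shows "distr lborel borel T = density lborel (\<lambda>_. ennreal (1/c))"
proof -
  have contT: "continuous_on UNIV T"
    using der by (meson continuous_at_imp_continuous_on has_derivative_continuous)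
  have measT: "T \<in> borel_measurable borel" using contT by (rule borel_measurable_continuous_onI)
  define M where "M = density (distr lborel borel T) (\<lambda>_. ennreal c)"
  have "lborel = M"
  proof (rule lborel_eqI)
    fix l u :: "real^'k::_"
    assume le: "\<And>b. b \<in> Basis \<Longrightarrow> l \<bullet> b \<le> u \<bullet> b"
    define X where "X = T -` box l u"
    have XS: "X = S ` box l u"
      unfolding X_def using ST TS by (auto intro: image_eqI[of _ S "T _"] )
    have "open X" unfolding X_def using contT continuous_on_open_vimage[of UNIV T] by auto
    moreover have "bounded X"
    proof -
      have "compact (S ` cbox l u)"
        by (rule compact_continuous_image) (use contS in \<open>auto intro: continuous_on_subset\<close>)
      then have "bounded (S ` cbox l u)" by (rule compact_imp_bounded)
      moreover have "X \<subseteq> S ` cbox l u" unfolding XS using box_subset_cbox by auto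
      ultimately show ?thesis by (rule bounded_subset)
    qed
    ultimately have Xl: "X \<in> lmeasurable" by (rule lmeasurable_open[rotated])
    have TX: "T ` X = box l u" unfolding XS using TS by (auto simp: image_image)
    have "measure lebesgue (T ` X) = integral X (\<lambda>x. \<bar>det (matrix (T' x))\<bar>)"
    proof (rule measure_differentiable_image_eq)
      show "X \<in> sets lebesgue" using Xl by (simp add: fmeasurableD)
      show "(T has_derivative T' x) (at x within X)" for x using der by (rule has_derivative_at_withinI)
      show "inj_on T X" using ST by (metis inj_on_inverseI)
      show "(\<lambda>x. \<bar>det (matrix (T' x))\<bar>) integrable_on X"
        unfolding detc using Xl by (rule integrable_on_const)
    qed
    also have "\<dots> = integral X (\<lambda>x. c * 1)" unfolding detc by simp
    also have "\<dots> = c * measure lebesgue X"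
      using Xl integral_mult_right[of X c "\<lambda>x. 1::real"] by (simp only: lmeasure_integral)
    finally have meq: "measure lebesgue (box l u) = c * measure lebesgue X" using TX by simp
    have "emeasure M (box l u) = ennreal c * emeasure (distr lborel borel T) (box l u)"
      unfolding M_def by (simp add: emeasure_density nn_integral_cmult_indicator)
    also have "\<dots> = ennreal c * emeasure lborel X"
      using measT by (simp add: emeasure_distr X_def)
    also have "emeasure lborel X = emeasure lebesgue X"
      using \<open>open X\<close> by (simp add: borel_open emeasure_completion)
    also have "\<dots> = ennreal (measure lebesgue X)"
      using Xl by (simp add: emeasure_eq_measure2)
    also have "ennreal c * ennreal (measure lebesgue X) = ennreal (measure lebesgue (box l u))"
      using c meq by (simp add: ennreal_mult)
    also have "\<dots> = emeasure lebesgue (box l u)"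
      by (simp add: emeasure_eq_measure2)
    also have "\<dots> = emeasure lborel (box l u)"
      by (simp add: emeasure_completion)
    also have "\<dots> = (\<Prod>b\<in>Basis. (u - l) \<bullet> b)"
      using le by (simp add: emeasure_lborel_box_eq)
    finally show "emeasure M (box l u) = (\<Prod>b\<in>Basis. (u - l) \<bullet> b)" .
  next
    show "sets M = sets borel" by (simp add: M_def)
  qed
  then have "density lborel (\<lambda>_. ennreal (1/c)) = density M (\<lambda>_. ennreal (1/c))" by simp
  also have "\<dots> = density (distr lborel borel T) (\<lambda>_. ennreal c * ennreal (1/c))"
    unfolding M_def by (simp add: density_density_eq)
  also have "(\<lambda>_::real^'k::_. ennreal c * ennreal (1/c)) = (\<lambda>_. 1)"
    using c by (simp add: ennreal_mult[symmetric])
  finally show ?thesis by (simp add: density_1)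
qed



lemma cv_gen:
  fixes T S :: "real^'n::finite \<Rightarrow> real^'n::_" and T' :: "real^'n::_ \<Rightarrow> real^'n::_ \<Rightarrow> real^'n::_"
  assumes ST: "\<And>x. S (T x) = x" and TS: "\<And>y. T (S y) = y"
    and contS: "continuous_on UNIV S"
    and der: "\<And>x. (T has_derivative T' x) (at x)"
    and detc: "\<And>x. \<bar>det (matrix (\<lambda>v. RR (T' x (RI v))))\<bar> = c" and c: "c > 0"
  shows "distr lborel borel T = density lborel (\<lambda>_. ennreal (1/c))"
proof -
  define T2 where "T2 = (\<lambda>w. RR (T (RI w)))"
  define S2 where "S2 = (\<lambda>w. RR (S (RI w)))"
  have blRR: "bounded_linear RR" and blRI: "bounded_linear RI"
    using linear_RR linear_RI linear_conv_bounded_linear by auto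
  have contT: "continuous_on UNIV T"
    using der by (meson continuous_at_imp_continuous_on has_derivative_continuous)
  have d2: "(T2 has_derivative (\<lambda>v. RR (T' (RI w) (RI v)))) (at w)" for w
  proof -
    have "(RI has_derivative RI) (at w)" using blRI by (rule bounded_linear.has_derivative[OF _ has_derivative_ident])
    then have "((\<lambda>w. T (RI w)) has_derivative (\<lambda>v. T' (RI w) (RI v))) (at w)"
      using der by (rule has_derivative_compose[of RI RI w UNIV T "T' (RI w)", unfolded o_def])
    then show ?thesis unfolding T2_def
      using bounded_linear.has_derivative[OF blRR] by blast
  qed
  have cRR: "continuous_on UNIV RR" by (rule linear_continuous_on[OF blRR])
  have cRI: "continuous_on UNIV RI" by (rule linear_continuous_on[OF blRI])
  have c2: "continuous_on UNIV S2" unfolding S2_def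
    by (rule continuous_on_compose2[OF cRR continuous_on_compose2[OF contS cRI]]) auto
  have main: "distr lborel borel T2 = density lborel (\<lambda>_. ennreal (1/c))"
    by (rule cv_ord[OF _ _ c2 d2 _ c]) (simp_all add: T2_def S2_def ST TS detc)
  have mRI: "RI \<in> borel_measurable (borel :: (real^'n oc) measure)"
    by (intro borel_measurable_continuous_onI linear_continuous_on blRI)
  have mT: "T \<in> borel_measurable borel" using contT by (rule borel_measurable_continuous_onI)
  have mT2: "T2 \<in> borel_measurable borel" unfolding T2_def
    by (rule borel_measurable_continuous_onI, rule continuous_on_compose2[OF cRR continuous_on_compose2[OF contT cRI]]) auto
  have "distr lborel borel T = distr (distr lborel borel RI) borel T"
    by (simp add: lborel_RI)
  also have "\<dots> = distr lborel borel (\<lambda>w. T (RI w))"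
    using mRI mT by (subst distr_distr) (auto simp: o_def)
  also have "\<dots> = distr lborel borel (\<lambda>w. RI (T2 w))" by (simp add: T2_def)
  also have "\<dots> = distr (distr lborel borel T2) borel RI"
    using mRI mT2 by (subst distr_distr) (auto simp: o_def)
  also have "\<dots> = distr (density lborel (\<lambda>_. ennreal (1/c))) borel RI" by (simp add: main)
  also have "\<dots> = density (distr lborel borel RI) (\<lambda>_. ennreal (1/c))"
    using mRI by (subst density_distr) auto
  also have "\<dots> = density lborel (\<lambda>_. ennreal (1/c))" by (simp add: lborel_RI)
  finally show ?thesis .
qed

lemma cv_density:
  fixes T S :: "real^'n::finite \<Rightarrow> real^'n::_" and g :: "real^'n::_ \<Rightarrow> ennreal"
  assumes ST: "\<And>x. S (T x) = x" and TS: "\<And>y. T (S y) = y"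
    and contS: "continuous_on UNIV S" and contT: "continuous_on UNIV T"
    and D: "distr lborel borel T = density lborel (\<lambda>_. ennreal (1/c))" and c: "c > 0"
    and g: "g \<in> borel_measurable borel"
  shows "distr (density lborel g) borel S = density lborel (\<lambda>z. g (T z) * ennreal c)"
proof -
  have mT: "T \<in> borel_measurable borel" using contT by (rule borel_measurable_continuous_onI)
  have mS: "S \<in> borel_measurable borel" using contS by (rule borel_measurable_continuous_onI)
  define \<nu> where "\<nu> = density lborel (\<lambda>z. g (T z) * ennreal c)"
  have "distr \<nu> borel T = density (distr lborel borel T) (\<lambda>y. g y * ennreal c)"
    unfolding \<nu>_def using mT g by (subst density_distr) auto
  also have "\<dots> = density lborel (\<lambda>y. ennreal (1/c) * (g y * ennreal c))"
    unfolding D using g by (subst density_density_eq) auto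
  also have "(\<lambda>y. ennreal (1/c) * (g y * ennreal c)) = g"
  proof
    fix y
    have "ennreal (1/c) * (g y * ennreal c) = g y * (ennreal (1/c) * ennreal c)"
      by (simp add: ac_simps)
    also have "ennreal (1/c) * ennreal c = 1" using c by (simp add: ennreal_mult[symmetric])
    finally show "ennreal (1/c) * (g y * ennreal c) = g y" by simp
  qed
  finally have e: "distr \<nu> borel T = density lborel g" .
  have "distr (density lborel g) borel S = distr (distr \<nu> borel T) borel S" by (simp add: e)
  also have "\<dots> = distr \<nu> borel (\<lambda>x. S (T x))"
    using mT mS unfolding \<nu>_def by (subst distr_distr) (auto simp: o_def)
  also have "\<dots> = distr \<nu> borel (\<lambda>x. x)" by (simp add: ST)
  also have "\<dots> = \<nu>" by (rule distr_id2) (simp add: \<nu>_def)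
  finally show ?thesis unfolding \<nu>_def .
qed



lemma det_rank:
  fixes A :: "real^'a::finite^'a::_" and r :: "'a \<Rightarrow> nat"
  assumes diag: "\<And>i. A$i$i = 1"
    and off: "\<And>i j. i \<noteq> j \<Longrightarrow> A$i$j \<noteq> 0 \<Longrightarrow> r i < r j"
  shows "det A = 1"
proof -
  let ?U = "UNIV:: 'a set"
  let ?PU = "{p. p permutes ?U}"
  let ?pp = "\<lambda>p. of_int (sign p) * prod (\<lambda>i. A$i$p i) (UNIV :: 'a set)"
  have fU: "finite ?U" by simp
  have id0: "{id} \<subseteq> ?PU" by (auto simp: permutes_id)
  have p0: "\<forall>p \<in> ?PU - {id}. ?pp p = 0"
  proof
    fix p
    assume p: "p \<in> ?PU - {id}"
    show "?pp p = 0"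
    proof (rule ccontr)
      assume "?pp p \<noteq> 0"
      then have nz: "\<And>i. A$i$p i \<noteq> 0" using prod_zero[OF fU] by force
      have le: "r i \<le> r (p i)" for i
        using off[OF _ nz[of i]] by (cases "p i = i") auto
      obtain i where i: "p i \<noteq> i" using p by (auto simp: fun_eq_iff)
      have lt: "r i < r (p i)" using off[OF _ nz[of i]] i by auto
      have "(\<Sum>i\<in>?U. r i) < (\<Sum>i\<in>?U. r (p i))"
        by (rule sum_strict_mono_ex1[OF fU]) (use le lt in auto)
      moreover have "(\<Sum>i\<in>?U. r (p i)) = (\<Sum>i\<in>?U. r i)"
        using p by (intro sum.reindex_bij_betw[of p ?U ?U "\<lambda>i. r i"]) (auto intro: permutes_imp_bij)
      ultimately show False by simp
    qed
  qed
  from sum.mono_neutral_cong_left[OF finite_permutations[OF fU] id0 p0] show ?thesis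
    unfolding det_def by (simp add: sign_id diag)
qed

lemma deriv_zero_dir:
  fixes g :: "'a::real_normed_vector \<Rightarrow> real"
  assumes D: "(g has_derivative D) (at z)" and c: "\<And>s. g (z + s *\<^sub>R v) = g z"
  shows "D v = 0"
proof -
  have lin: "bounded_linear D" using D by (rule has_derivative_bounded_linear)
  have "((\<lambda>s. z + s *\<^sub>R v) has_derivative (\<lambda>s. s *\<^sub>R v)) (at 0)"
    by (auto intro!: derivative_eq_intros)
  then have "((\<lambda>s. g (z + s *\<^sub>R v)) has_derivative (\<lambda>s. D (s *\<^sub>R v))) (at 0)"
    using has_derivative_compose[of "\<lambda>s. z + s *\<^sub>R v" "\<lambda>s. s *\<^sub>R v" 0 UNIV g D] D by (simp add: o_def)
  then have "((\<lambda>s. g (z + s *\<^sub>R v)) has_real_derivative D v) (at 0)"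
    using linear_cmul[OF bounded_linear.linear[OF lin]] by (simp add: has_field_derivative_def mult_commute_abs)
  moreover have "((\<lambda>s. g (z + s *\<^sub>R v)) has_real_derivative 0) (at 0)"
    unfolding c by simp
  ultimately show ?thesis by (rule DERIV_unique)
qed

definition C2wit :: "(real^'n::finite \<Rightarrow> real) \<Rightarrow> (real^'n \<Rightarrow> ((real^'n) \<Rightarrow>\<^sub>L real)) \<Rightarrow> (real^'n \<Rightarrow> ((real^'n) \<Rightarrow>\<^sub>L ((real^'n) \<Rightarrow>\<^sub>L real))) \<Rightarrow> bool" where
  "C2wit g Dg D2g \<longleftrightarrow> (\<forall>z. (g has_derivative blinfun_apply (Dg z)) (at z)) \<and>
      (\<forall>z. (Dg has_derivative blinfun_apply (D2g z)) (at z)) \<and> continuous_on UNIV D2g"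

lemma C2_wit: "C2 g \<longleftrightarrow> (\<exists>Dg D2g. C2wit g Dg D2g)"
  unfolding C2_def C2wit_def by blast

lemma C2wit_line1:
  assumes "C2wit g Dg D2g"
  shows "((\<lambda>s. g (z + s *\<^sub>R v)) has_real_derivative (Dg (z + s *\<^sub>R v)) v) (at s)"
proof -
  have "((\<lambda>s. z + s *\<^sub>R v) has_derivative (\<lambda>t. t *\<^sub>R v)) (at s)"
    by (auto intro!: derivative_eq_intros)
  moreover have "(g has_derivative blinfun_apply (Dg (z + s *\<^sub>R v))) (at (z + s *\<^sub>R v))"
    using assms unfolding C2wit_def by blast
  ultimately have "((\<lambda>s. g (z + s *\<^sub>R v)) has_derivative (\<lambda>t. (Dg (z + s *\<^sub>R v)) (t *\<^sub>R v))) (at s)"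
    using has_derivative_compose[of "\<lambda>s. z + s *\<^sub>R v" "\<lambda>t. t *\<^sub>R v" s UNIV g] by (simp add: o_def)
  then show ?thesis
    by (simp add: has_field_derivative_def blinfun.scaleR_right mult_commute_abs)
qed

lemma C2wit_line2:
  assumes "C2wit g Dg D2g"
  shows "((\<lambda>s. (Dg (z + s *\<^sub>R v)) v) has_real_derivative (D2g (z + s *\<^sub>R v)) v v) (at s)"
proof -
  have "((\<lambda>s. z + s *\<^sub>R v) has_derivative (\<lambda>t. t *\<^sub>R v)) (at s)"
    by (auto intro!: derivative_eq_intros)
  moreover have "(Dg has_derivative blinfun_apply (D2g (z + s *\<^sub>R v))) (at (z + s *\<^sub>R v))"
    using assms unfolding C2wit_def by blast
  ultimately have "((\<lambda>s. Dg (z + s *\<^sub>R v)) has_derivative (\<lambda>t. (D2g (z + s *\<^sub>R v)) (t *\<^sub>R v))) (at s)"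
    using has_derivative_compose[of "\<lambda>s. z + s *\<^sub>R v" "\<lambda>t. t *\<^sub>R v" s UNIV Dg] by (simp add: o_def)
  then have "((\<lambda>s. blinfun_apply (Dg (z + s *\<^sub>R v)) v) has_derivative (\<lambda>t. blinfun_apply ((D2g (z + s *\<^sub>R v)) (t *\<^sub>R v)) v)) (at s)"
    by (rule bounded_linear.has_derivative[OF blinfun.bounded_linear_left])
  then show ?thesis
    by (simp add: has_field_derivative_def blinfun.scaleR_right blinfun.scaleR_left mult_commute_abs)
qed

lemma C2wit_deriv1:
  assumes "C2wit g Dg D2g"
  shows "deriv (\<lambda>s. g (z + s *\<^sub>R v)) = (\<lambda>s. (Dg (z + s *\<^sub>R v)) v)"
  using C2wit_line1[OF assms] by (auto intro!: DERIV_imp_deriv)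

lemma C2wit_dir2:
  assumes "C2wit g Dg D2g"
  shows "dir2 g v z = (D2g z) v v"
  unfolding dir2_def C2wit_deriv1[OF assms]
  using C2wit_line2[OF assms, of z v 0] by (simp add: DERIV_imp_deriv)

lemma C2wit_cont: "C2wit g Dg D2g \<Longrightarrow> continuous_on UNIV g"
  unfolding C2wit_def by (meson continuous_at_imp_continuous_on has_derivative_continuous)




lemma has_derivative_vecI:
  fixes f :: "'a::real_normed_vector \<Rightarrow> real^'n::finite"
  assumes "\<And>j. ((\<lambda>x. f x $ j) has_derivative (\<lambda>h. f' h $ j)) (at a)"
  shows "(f has_derivative f') (at a)"
  using assms unfolding has_derivative_componentwise_within[of f f' a UNIV]
  by (auto simp: Basis_vec_def inner_axis)

locale vm =
  fixes H :: "real^'n::finite^'d::finite" and G :: "('n \<times> 'n) set"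
    and f :: "'n \<Rightarrow> real^'n \<Rightarrow> real" and \<sigma> :: "'n \<Rightarrow> real"
  assumes valid: "valid_model H G f \<sigma>"
begin

lemma ac: "acyclic G" and dep: "depends_only_on (f i) (parents G i)" and C2f: "C2 (f i)"
  and dnl: "dir_nonlinear (f i) (parents G i)" and sig: "\<sigma> i > 0" and rankH: "rank H = CARD('n)"
  using valid unfolding valid_model_def by auto

lemma wfG: "wf G" using ac by (simp add: finite_acyclic_wf)
lemma wfG': "wf (G\<inverse>)" using ac by (simp add: finite_acyclic_wf_converse)
lemma irr: "(i, i) \<notin> G" using ac unfolding acyclic_def by auto

lemma dep_eq: "(\<And>j. (j, i) \<in> G \<Longrightarrow> z $ j = z' $ j) \<Longrightarrow> f i z = f i z'"
  using dep[of i] unfolding depends_only_on_def parents_def by auto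

definition W where "W = (SOME W. \<forall>i. C2wit (f i) (fst (W i)) (snd (W i)))"

lemma W: "C2wit (f i) (fst (W i)) (snd (W i))"
proof -
  have "\<forall>i. \<exists>p. C2wit (f i) (fst p) (snd p)" using C2f C2_wit by fastforce
  then have "\<exists>W. \<forall>i. C2wit (f i) (fst (W i)) (snd (W i))" by (rule choice)
  then show ?thesis unfolding W_def by (rule someI_ex[where P="\<lambda>W. \<forall>i. C2wit (f i) (fst (W i)) (snd (W i))", THEN spec])
qed

definition Df where "Df i = fst (W i)"
definition D2f where "D2f i = snd (W i)"

lemma Wit: "C2wit (f i) (Df i) (D2f i)" using W by (simp add: Df_def D2f_def)

lemma contf: "continuous_on UNIV (f i)" using Wit by (rule C2wit_cont)

lemma Df_zero: "(j, i) \<notin> G \<Longrightarrow> (Df i z) (axis j 1) = 0"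
proof -
  assume nj: "(j, i) \<notin> G"
  have "(f i has_derivative blinfun_apply (Df i z)) (at z)" using Wit unfolding C2wit_def by blast
  then show ?thesis
    by (rule deriv_zero_dir) (rule dep_eq, use nj in \<open>auto simp: axis_def\<close>)
qed

definition Tm :: "real^'n \<Rightarrow> real^'n" where "Tm z = (\<chi> i. z $ i - f i z)"
definition Sm :: "real^'n \<Rightarrow> real^'n" where "Sm = sem_solve f"

lemma sol_unique:
  assumes "\<forall>i. z $ i = f i z + e $ i" "\<forall>i. z' $ i = f i z' + e $ i"
  shows "z = z'"
proof -
  have "z $ i = z' $ i" for i
  proof (induction i rule: wf_induct[OF wfG])
    case (1 x)
    then have "f x z = f x z'" by (intro dep_eq) auto
    then show ?case using assms by simp
  qed
  then show ?thesis by (simp add: vec_eq_iff)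
qed

lemma sol_exists_on:
  "finite A \<Longrightarrow> (\<forall>i\<in>A. \<forall>j. (j, i) \<in> G \<longrightarrow> j \<in> A) \<Longrightarrow> \<exists>z. \<forall>i\<in>A. z $ i = f i z + e $ i"
proof (induction "card A" arbitrary: A)
  case 0
  then show ?case by auto
next
  case (Suc n)
  then have "A \<noteq> {}" by auto
  then obtain x where "x \<in> A" by auto
  obtain i where iA: "i \<in> A" and sink: "\<And>y. (y, i) \<in> G\<inverse> \<Longrightarrow> y \<notin> A"
    using wfE_min[OF wfG' \<open>x \<in> A\<close>] by blast
  have sink': "\<And>w. w \<in> A \<Longrightarrow> (i, w) \<notin> G" using sink by auto
  define A' where "A' = A - {i}"
  have "card A' = n" using Suc iA by (simp add: A'_def)
  moreover have "finite A'" using Suc by (simp add: A'_def)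
  moreover have "\<forall>k\<in>A'. \<forall>j. (j, k) \<in> G \<longrightarrow> j \<in> A'"
    using Suc.prems sink' unfolding A'_def by blast
  ultimately obtain z where z: "\<forall>k\<in>A'. z $ k = f k z + e $ k" using Suc.hyps by blast
  define z' where "z' = (\<chi> j. if j = i then f i z + e $ i else z $ j)"
  have fe: "f k z' = f k z" if "k \<in> A" for k
    by (rule dep_eq) (use sink' that in \<open>auto simp: z'_def\<close>)
  have "\<forall>k\<in>A. z' $ k = f k z' + e $ k"
  proof
    fix k assume k: "k \<in> A"
    show "z' $ k = f k z' + e $ k"
    proof (cases "k = i")
      case True then show ?thesis using fe[OF iA] by (simp add: z'_def)
    next
      case False then show ?thesis using z fe[OF k] k by (simp add: z'_def A'_def)
    qed
  qed
  then show ?case by blast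
qed

lemma sol_exists: "\<exists>z. \<forall>i. z $ i = f i z + e $ i"
  using sol_exists_on[of UNIV e] by auto

lemma Sm_eq: "(Sm e) $ i = f i (Sm e) + e $ i"
proof -
  have "\<exists>!z. \<forall>i. z $ i = f i z + e $ i" using sol_exists sol_unique by blast
  then have "\<forall>i. (THE z. \<forall>i. z $ i = f i z + e $ i) $ i = f i (THE z. \<forall>i. z $ i = f i z + e $ i) + e $ i"
    by (rule theI')
  then show ?thesis unfolding Sm_def sem_solve_def by blast
qed

lemma Tm_Sm[simp]: "Tm (Sm e) = e"
  by (simp add: Tm_def vec_eq_iff Sm_eq)

lemma Sm_Tm[simp]: "Sm (Tm z) = z"
proof -
  have "\<forall>i. z $ i = f i z + (Tm z) $ i" by (simp add: Tm_def)
  moreover have "\<forall>i. (Sm (Tm z)) $ i = f i (Sm (Tm z)) + (Tm z) $ i" by (simp add: Sm_eq)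
  ultimately show ?thesis using sol_unique by metis
qed

lemma contTm: "continuous_on UNIV Tm"
proof -
  have "continuous_on UNIV (\<lambda>z. (Tm z) $ i)" for i
  proof -
    have "continuous_on UNIV (\<lambda>z::real^'n. z $ i - f i z)"
      by (rule continuous_on_diff[OF continuous_on_component[OF continuous_on_id] contf])
    then show ?thesis unfolding Tm_def by simp
  qed
  then have "continuous_on UNIV (\<lambda>z. \<chi> i. (Tm z) $ i)" by (rule continuous_on_vec_lambda)
  then show ?thesis by simp
qed

lemma contSm: "continuous_on UNIV Sm"
proof -
  have injT: "inj_on Tm B" for B by (metis Sm_Tm inj_on_inverseI)
  have "open (Sm -` B)" if "open B" for B
  proof -
    have "Sm -` B = Tm ` B"
    proof
      show "Sm -` B \<subseteq> Tm ` B" by (auto intro: image_eqI[of _ Tm "Sm _"])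
      show "Tm ` B \<subseteq> Sm -` B" by auto
    qed
    moreover have "open (Tm ` B)"
      by (rule invariance_of_domain[OF continuous_on_subset[OF contTm] that injT]) auto
    ultimately show ?thesis by simp
  qed
  then show ?thesis using continuous_on_open_vimage[of UNIV Sm] by auto
qed

definition Tm' :: "real^'n \<Rightarrow> real^'n \<Rightarrow> real^'n" where
  "Tm' z v = (\<chi> i. v $ i - (Df i z) v)"

lemma derTm: "(Tm has_derivative Tm' z) (at z)"
proof (rule has_derivative_vecI)
  fix j
  have "(f j has_derivative blinfun_apply (Df j z)) (at z)" using Wit unfolding C2wit_def by blast
  moreover have "((\<lambda>x::real^'n. x $ j) has_derivative (\<lambda>x. x $ j)) (at z)"
    by (rule bounded_linear_imp_has_derivative[OF bounded_linear_vec_nth])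
  ultimately have "((\<lambda>x. x $ j - f j x) has_derivative (\<lambda>h. h $ j - (Df j z) h)) (at z)"
    by (intro has_derivative_diff)
  then show "((\<lambda>x. Tm x $ j) has_derivative (\<lambda>h. Tm' z h $ j)) (at z)"
    unfolding Tm_def Tm'_def by simp
qed

lemma detTm: "det (matrix (\<lambda>v. RR (Tm' z (RI v)))) = 1"
proof (rule det_rank[where r="\<lambda>a. lay G (Rep_oc a)"])
  have RIax: "RI (axis b 1) = axis (Rep_oc b) (1::real)" for b :: "'n oc"
  proof -
    have "Abs_oc i = b \<longleftrightarrow> i = Rep_oc b" for i by (metis Abs_oc_inverse Rep_oc_inverse UNIV_I)
    then show ?thesis by (simp add: RI_def axis_def vec_eq_iff)
  qed
  have ent: "matrix (\<lambda>v. RR (Tm' z (RI v))) $ a $ b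
      = (if Rep_oc b = Rep_oc a then 1 else 0) - (Df (Rep_oc a) z) (axis (Rep_oc b) 1)" for a b
    by (simp add: matrix_def RR_def Tm'_def RIax) (simp add: axis_def)
  show "matrix (\<lambda>v. RR (Tm' z (RI v))) $ a $ a = 1" for a
    using ent Df_zero irr by simp
  show "lay G (Rep_oc a) < lay G (Rep_oc b)"
    if "a \<noteq> b" "matrix (\<lambda>v. RR (Tm' z (RI v))) $ a $ b \<noteq> 0" for a b
  proof -
    have "Rep_oc b \<noteq> Rep_oc a" using that(1) by (simp add: Rep_oc_inject)
    then have "(Df (Rep_oc a) z) (axis (Rep_oc b) 1) \<noteq> 0" using that(2) ent by simp
    then have "(Rep_oc b, Rep_oc a) \<in> G" using Df_zero by blast
    then show ?thesis by (rule lay_parent[OF ac])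
  qed
qed

lemma distr_Tm: "distr lborel borel Tm = density lborel (\<lambda>_. ennreal (1/1))"
  by (rule cv_gen[OF Sm_Tm Tm_Sm contSm derTm]) (simp_all add: detTm)

definition qZ :: "real^'n \<Rightarrow> real" where
  "qZ z = (\<Prod>i\<in>UNIV. normal_density 0 (\<sigma> i) (z $ i - f i z))"

lemma qZ_pos: "qZ z > 0"
  unfolding qZ_def using sig by (intro prod_pos) (auto simp: normal_density_pos)

lemma cont_qZ: "continuous_on UNIV qZ"
proof -
  have c1: "continuous_on UNIV (\<lambda>z::real^'n. z $ i - f i z)" for i
    by (rule continuous_on_diff[OF continuous_on_component[OF continuous_on_id] contf])
  have "continuous_on UNIV (\<lambda>z. normal_density 0 (\<sigma> i) (z $ i - f i z))" for i
    unfolding normal_density_def using sig[of i] by (intro continuous_intros c1 contf) auto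
  then show ?thesis unfolding qZ_def by (intro continuous_on_prod)
qed

lemma Z_law: "distr (noise_measure \<sigma>) borel Sm = density lborel (\<lambda>z. ennreal (qZ z))"
proof -
  define g where "g = (\<lambda>e::real^'n. \<Prod>i\<in>UNIV. ennreal (normal_density 0 (\<sigma> i) (e $ i)))"
  have gm: "g \<in> borel_measurable borel" unfolding g_def by measurable
  have "distr (density lborel g) borel Sm = density lborel (\<lambda>z. g (Tm z) * ennreal 1)"
    by (rule cv_density[OF Sm_Tm Tm_Sm contSm contTm distr_Tm _ gm]) simp
  moreover have "g (Tm z) * ennreal 1 = ennreal (qZ z)" for z
    unfolding g_def qZ_def Tm_def by (simp add: prod_ennreal normal_density_nonneg)
  ultimately show ?thesis unfolding noise_measure_def g_def by simp
qed

end




lemma meas_noise: "f \<in> borel_measurable borel \<Longrightarrow> f \<in> borel_measurable (noise_measure \<sigma>)"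
  unfolding noise_measure_def by (simp add: measurable_lborel2)

locale vm2 = M: vm H G f \<sigma> + M': vm H' G' f' \<sigma>'
  for H :: "real^'n::finite^'d::finite" and G f \<sigma> and H' :: "real^'n^'d" and G' f' \<sigma>' +
  fixes L :: "real^'d^'n"
  assumes same: "obs_dist H f \<sigma> = obs_dist H' f' \<sigma>'" and L: "L ** H = mat 1"
begin

definition A where "A = L ** H'"

lemma cont_lin: "continuous_on UNIV (\<lambda>x. (C::real^'a::finite^'b::finite) *v x)"
  by (rule linear_continuous_on) (simp add: linear_conv_bounded_linear[symmetric])

lemma law_eq: "density lborel (\<lambda>z. ennreal (M.qZ z)) = distr (density lborel (\<lambda>z. ennreal (M'.qZ z))) borel (\<lambda>x. A *v x)"
proof -
  have m1: "(\<lambda>e. H *v M.Sm e) \<in> borel_measurable (noise_measure \<sigma>)"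
    by (intro meas_noise borel_measurable_continuous_onI continuous_on_compose2[OF cont_lin M.contSm]) auto
  have m2: "(\<lambda>e. H' *v M'.Sm e) \<in> borel_measurable (noise_measure \<sigma>')"
    by (intro meas_noise borel_measurable_continuous_onI continuous_on_compose2[OF cont_lin M'.contSm]) auto
  have m3: "M'.Sm \<in> borel_measurable (noise_measure \<sigma>')"
    by (intro meas_noise borel_measurable_continuous_onI M'.contSm)
  have mL: "(\<lambda>x. L *v x) \<in> borel_measurable borel" by (intro borel_measurable_continuous_onI cont_lin)
  have mA: "(\<lambda>x. A *v x) \<in> borel_measurable borel" by (intro borel_measurable_continuous_onI cont_lin)
  have "distr (obs_dist H f \<sigma>) borel (\<lambda>x. L *v x) = distr (noise_measure \<sigma>) borel (\<lambda>e. L *v (H *v M.Sm e))"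
    unfolding obs_dist_def using m1 mL by (subst distr_distr) (auto simp: o_def M.Sm_def)
  also have "\<dots> = distr (noise_measure \<sigma>) borel M.Sm"
    by (simp add: matrix_vector_mul_assoc L M.Sm_def)
  also have "\<dots> = density lborel (\<lambda>z. ennreal (M.qZ z))" by (rule M.Z_law)
  finally have e1: "distr (obs_dist H f \<sigma>) borel (\<lambda>x. L *v x) = density lborel (\<lambda>z. ennreal (M.qZ z))" .
  have "distr (obs_dist H' f' \<sigma>') borel (\<lambda>x. L *v x) = distr (noise_measure \<sigma>') borel (\<lambda>e. L *v (H' *v M'.Sm e))"
    unfolding obs_dist_def using m2 mL by (subst distr_distr) (auto simp: o_def M'.Sm_def)
  also have "\<dots> = distr (noise_measure \<sigma>') borel (\<lambda>e. A *v M'.Sm e)"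
    by (simp add: matrix_vector_mul_assoc A_def)
  also have "\<dots> = distr (distr (noise_measure \<sigma>') borel M'.Sm) borel (\<lambda>x. A *v x)"
    using m3 mA by (subst distr_distr) (auto simp: o_def)
  also have "\<dots> = distr (density lborel (\<lambda>z. ennreal (M'.qZ z))) borel (\<lambda>x. A *v x)" by (simp add: M'.Z_law)
  finally show ?thesis using e1 same by simp
qed

lemma A_inv: "\<exists>B. B ** A = mat 1"
proof (rule ccontr)
  assume nB: "\<not> (\<exists>B. B ** A = mat 1)"
  then obtain x where "x \<noteq> 0" "A *v x = 0" using matrix_left_invertible_ker by blast
  then have "rank A \<noteq> CARD('n)" using matrix_nonfull_linear_equations_eq by blast
  then have "rank (transpose A) \<noteq> CARD('n)" by (simp add: rank_transpose)
  then obtain y where y: "y \<noteq> 0" "transpose A *v y = 0" using matrix_nonfull_linear_equations_eq by blast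
  have orth: "y \<bullet> (A *v x) = 0" for x
    using y dot_lmul_matrix[of y A x] by simp
  define P where "P = {x. y \<bullet> x = 0}"
  have "negligible P" unfolding P_def using y by (intro negligible_hyperplane) auto
  then have "P \<in> null_sets lebesgue" by (simp add: negligible_iff_null_sets)
  moreover have "P \<in> sets borel" unfolding P_def
    by (intro borel_closed closed_hyperplane)
  ultimately have Pn: "P \<in> null_sets lborel" using null_sets_completion_iff[of P lborel] by simp
  have qm: "(\<lambda>z. ennreal (M.qZ z)) \<in> borel_measurable lborel"
    using measurable_compose[OF borel_measurable_continuous_onI[OF M.cont_qZ] measurable_ennreal] by simp
  have q'm: "(\<lambda>z. ennreal (M'.qZ z)) \<in> borel_measurable lborel"
    using measurable_compose[OF borel_measurable_continuous_onI[OF M'.cont_qZ] measurable_ennreal] by simp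
  have "P \<in> null_sets (density lborel (\<lambda>z. ennreal (M.qZ z)))"
    using Pn qm by (auto simp: null_sets_density_iff intro: AE_I'[of P])
  then have "emeasure (density lborel (\<lambda>z. ennreal (M.qZ z))) P = 0" by (rule null_setsD1)
  then have "emeasure (distr (density lborel (\<lambda>z. ennreal (M'.qZ z))) borel (\<lambda>x. A *v x)) P = 0"
    by (simp only: law_eq)
  moreover have "(\<lambda>x. A *v x) \<in> borel_measurable (density lborel (\<lambda>z. ennreal (M'.qZ z)))"
    by (simp add: measurable_lborel2 borel_measurable_continuous_onI cont_lin)
  ultimately have "emeasure (density lborel (\<lambda>z. ennreal (M'.qZ z))) UNIV = 0"
    using \<open>P \<in> sets borel\<close> orth by (simp add: emeasure_distr P_def)
  then have "AE x in lborel. ennreal (M'.qZ x) = 0"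
    using q'm by (simp add: emeasure_density nn_integral_0_iff_AE)
  moreover have "AE x in lborel. ennreal (M'.qZ x) = 0 \<longrightarrow> False"
    using M'.qZ_pos by (intro AE_I2) (metis ennreal_eq_0_iff not_le)
  ultimately have "AE x::real^'n in lborel. False" by (rule AE_mp)
  then have "ae_filter (lborel::(real^'n) measure) = bot" using trivial_limit_def by blast
  then show False unfolding ae_filter_eq_bot_iff by simp
qed

definition B where "B = (SOME B. B ** A = mat 1)"

lemma BA: "B ** A = mat 1" unfolding B_def using A_inv by (rule someI_ex)
lemma AB: "A ** B = mat 1" using BA matrix_left_right_inverse by blast

lemma BAx[simp]: "B *v (A *v x) = x" by (simp add: matrix_vector_mul_assoc BA)
lemma ABx[simp]: "A *v (B *v x) = x" by (simp add: matrix_vector_mul_assoc AB)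

definition cB where "cB = \<bar>det (matrix (\<lambda>v. RR (B *v (RI v))))\<bar>"

lemma cB_pos: "cB > 0"
proof -
  have "linear (RR \<circ> (\<lambda>x. A *v x) \<circ> RI)"
    by (intro linear_compose linear_RR linear_RI matrix_vector_mul_linear)
  then have l1: "linear (\<lambda>v. RR (A *v (RI v)))" by (simp add: o_def)
  have "linear (RR \<circ> (\<lambda>x. B *v x) \<circ> RI)"
    by (intro linear_compose linear_RR linear_RI matrix_vector_mul_linear)
  then have l2: "linear (\<lambda>v. RR (B *v (RI v)))" by (simp add: o_def)
  have "(\<lambda>v. RR (B *v (RI v))) \<circ> (\<lambda>v. RR (A *v (RI v))) = id" by (simp add: fun_eq_iff)
  then have "matrix (\<lambda>v. RR (B *v (RI v))) ** matrix (\<lambda>v. RR (A *v (RI v))) = mat 1"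
    using matrix_compose[OF l1 l2] by (simp add: matrix_id_mat_1)
  then have "det (matrix (\<lambda>v. RR (B *v (RI v)))) * det (matrix (\<lambda>v. RR (A *v (RI v)))) = 1"
    by (metis det_I det_mul)
  then have "det (matrix (\<lambda>v. RR (B *v (RI v)))) \<noteq> 0" by (metis mult_zero_left zero_neq_one)
  then show ?thesis unfolding cB_def by simp
qed

lemma dens_rel: "M.qZ z = M'.qZ (B *v z) * cB"
proof -
  have derB: "((\<lambda>x. B *v x) has_derivative (\<lambda>v. B *v v)) (at x)" for x
    by (rule bounded_linear_imp_has_derivative) (simp add: linear_conv_bounded_linear[symmetric])
  have D: "distr lborel borel (\<lambda>x. B *v x) = density lborel (\<lambda>_. ennreal (1/cB))"
    by (rule cv_gen[OF _ _ cont_lin[of A] derB _ cB_pos]) (simp_all add: cB_def)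
  have q'm: "(\<lambda>z. ennreal (M'.qZ z)) \<in> borel_measurable borel"
    using measurable_compose[OF borel_measurable_continuous_onI[OF M'.cont_qZ] measurable_ennreal] by simp
  have qm: "(\<lambda>z. ennreal (M.qZ z)) \<in> borel_measurable borel"
    using measurable_compose[OF borel_measurable_continuous_onI[OF M.cont_qZ] measurable_ennreal] by simp
  have DD: "distr (density lborel (\<lambda>z. ennreal (M'.qZ z))) borel (\<lambda>x. A *v x)
      = density lborel (\<lambda>z. ennreal (M'.qZ (B *v z)) * ennreal cB)"
    by (rule cv_density[OF _ _ cont_lin cont_lin D cB_pos q'm]) simp_all
  have e: "density lborel (\<lambda>z. ennreal (M.qZ z)) = density lborel (\<lambda>z. ennreal (M'.qZ (B *v z) * cB))"
  proof -
    have "(\<lambda>z. ennreal (M'.qZ (B *v z)) * ennreal cB) = (\<lambda>z. ennreal (M'.qZ (B *v z) * cB))"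
      using M'.qZ_pos cB_pos by (simp add: ennreal_mult less_imp_le fun_eq_iff)
    then show ?thesis using law_eq DD by simp
  qed
  have cr: "continuous_on UNIV (\<lambda>z. M'.qZ (B *v z) * cB)"
    by (intro continuous_on_mult_right continuous_on_compose2[OF M'.cont_qZ cont_lin]) simp
  have rm: "(\<lambda>z. ennreal (M'.qZ (B *v z) * cB)) \<in> borel_measurable borel"
    using measurable_compose[OF borel_measurable_continuous_onI[OF cr] measurable_ennreal] by simp
  have "AE z in lborel. ennreal (M.qZ z) = ennreal (M'.qZ (B *v z) * cB)"
    using e qm rm sigma_finite_measure.density_unique_iff[OF sigma_finite_lborel] by auto
  moreover have "AE z in lborel. ennreal (M.qZ z) = ennreal (M'.qZ (B *v z) * cB) \<longrightarrow> M.qZ z = M'.qZ (B *v z) * cB"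
  proof (rule AE_I2, rule impI)
    fix z assume "ennreal (M.qZ z) = ennreal (M'.qZ (B *v z) * cB)"
    moreover have "0 \<le> M.qZ z" "0 \<le> M'.qZ (B *v z) * cB"
      using M.qZ_pos[of z] M'.qZ_pos[of "B *v z"] cB_pos by auto
    ultimately show "M.qZ z = M'.qZ (B *v z) * cB" by simp
  qed
  ultimately have "AE z in lborel. M.qZ z = M'.qZ (B *v z) * cB" by (rule AE_mp)
  then have "AE z in lebesgue. M.qZ z = M'.qZ (B *v z) * cB" by (rule AE_completion)
  moreover have "closed {z. M.qZ z = M'.qZ (B *v z) * cB}"
    using M.cont_qZ cr by (intro closed_Collect_eq) auto
  ultimately show ?thesis using mem_closed_if_AE_lebesgue[of "{z. M.qZ z = M'.qZ (B *v z) * cB}"] by auto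
qed

end




context vm
begin

definition S :: "nat \<Rightarrow> 'n set" where "S k = {i. k \<le> lay G i}"
definition Qk :: "nat \<Rightarrow> real^'n \<Rightarrow> real" where
  "Qk k z = (\<Sum>i\<in>S k. (z $ i - f i z)\<^sup>2 / (2 * (\<sigma> i)\<^sup>2))"
definition d1 :: "'n \<Rightarrow> real^'n \<Rightarrow> real^'n \<Rightarrow> real" where
  "d1 i v z = deriv (\<lambda>s. f i (z + s *\<^sub>R v)) 0"
definition tau :: "'n \<Rightarrow> real^'n \<Rightarrow> real^'n \<Rightarrow> real" where
  "tau i v z = ((v $ i - d1 i v z)\<^sup>2 - (z $ i - f i z) * dir2 (f i) v z) / (\<sigma> i)\<^sup>2"

lemma d1_eq: "d1 i v z = (Df i z) v"
  unfolding d1_def C2wit_deriv1[OF Wit] by simp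

lemma dir2_eq: "dir2 (f i) v z = (D2f i z) v v"
  by (rule C2wit_dir2[OF Wit])

lemma a_der: "((\<lambda>s. (z + s *\<^sub>R v) $ i - f i (z + s *\<^sub>R v)) has_real_derivative (v $ i - (Df i (z + s *\<^sub>R v)) v)) (at s)"
proof -
  have "((\<lambda>s. z $ i + s * v $ i) has_real_derivative v $ i) (at s)"
    by (auto intro!: derivative_eq_intros)
  then have "((\<lambda>s. z $ i + s * v $ i - f i (z + s *\<^sub>R v)) has_real_derivative (v $ i - (Df i (z + s *\<^sub>R v)) v)) (at s)"
    by (rule DERIV_diff[OF _ C2wit_line1[OF Wit]])
  then show ?thesis by simp
qed

lemma a'_der: "((\<lambda>s. v $ i - (Df i (z + s *\<^sub>R v)) v) has_real_derivative (- (D2f i (z + s *\<^sub>R v)) v v)) (at s)"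
  using DERIV_diff[OF DERIV_const C2wit_line2[OF Wit]] by simp

lemma Q1: "((\<lambda>s. Qk k (z + s *\<^sub>R v)) has_real_derivative
   (\<Sum>i\<in>S k. ((z + s *\<^sub>R v) $ i - f i (z + s *\<^sub>R v)) * (v $ i - (Df i (z + s *\<^sub>R v)) v) / (\<sigma> i)\<^sup>2)) (at s)"
  unfolding Qk_def
proof (rule DERIV_sum)
  fix i
  show "((\<lambda>s. ((z + s *\<^sub>R v) $ i - f i (z + s *\<^sub>R v))\<^sup>2 / (2 * (\<sigma> i)\<^sup>2)) has_real_derivative
      ((z + s *\<^sub>R v) $ i - f i (z + s *\<^sub>R v)) * (v $ i - (Df i (z + s *\<^sub>R v)) v) / (\<sigma> i)\<^sup>2) (at s)"
    using sig[of i] by (intro DERIV_cong[OF DERIV_cdivide[OF DERIV_power[OF a_der]]]) (simp add: field_simps)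
qed

lemma Q2: "((\<lambda>s. \<Sum>i\<in>S k. ((z + s *\<^sub>R v) $ i - f i (z + s *\<^sub>R v)) * (v $ i - (Df i (z + s *\<^sub>R v)) v) / (\<sigma> i)\<^sup>2)
   has_real_derivative
   (\<Sum>i\<in>S k. ((v $ i - (Df i (z + s *\<^sub>R v)) v)\<^sup>2 - ((z + s *\<^sub>R v) $ i - f i (z + s *\<^sub>R v)) * (D2f i (z + s *\<^sub>R v)) v v) / (\<sigma> i)\<^sup>2)) (at s)"
proof (rule DERIV_sum)
  fix i
  show "((\<lambda>s. ((z + s *\<^sub>R v) $ i - f i (z + s *\<^sub>R v)) * (v $ i - (Df i (z + s *\<^sub>R v)) v) / (\<sigma> i)\<^sup>2) has_real_derivative
     ((v $ i - (Df i (z + s *\<^sub>R v)) v)\<^sup>2 - ((z + s *\<^sub>R v) $ i - f i (z + s *\<^sub>R v)) * (D2f i (z + s *\<^sub>R v)) v v) / (\<sigma> i)\<^sup>2) (at s)"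
    by (rule DERIV_cong[OF DERIV_cdivide[OF DERIV_mult[OF a_der a'_der]]]) (simp add: power2_eq_square algebra_simps)
qed

lemma dir2_Qk: "dir2 (Qk k) v z = (\<Sum>i\<in>S k. tau i v z)"
proof -
  have "deriv (\<lambda>s. Qk k (z + s *\<^sub>R v)) = (\<lambda>s. \<Sum>i\<in>S k. ((z + s *\<^sub>R v) $ i - f i (z + s *\<^sub>R v)) * (v $ i - (Df i (z + s *\<^sub>R v)) v) / (\<sigma> i)\<^sup>2)"
    using Q1 by (auto intro!: DERIV_imp_deriv)
  then have "dir2 (Qk k) v z = (\<Sum>i\<in>S k. ((v $ i - (Df i z) v)\<^sup>2 - (z $ i - f i z) * (D2f i z) v v) / (\<sigma> i)\<^sup>2)"
    unfolding dir2_def using DERIV_imp_deriv[OF Q2[where s=0 and k=k and z=z and v=v]] by simp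
  then show ?thesis unfolding tau_def d1_eq dir2_eq .
qed

definition Vk :: "nat \<Rightarrow> (real^'n) set" where "Vk k = {v. \<forall>m. k < lay G m \<longrightarrow> v $ m = 0}"
definition cst :: "(real^'n \<Rightarrow> real) \<Rightarrow> (real^'n) set" where "cst F = {v. \<exists>c. \<forall>z. dir2 F v z = c}"

lemma deriv_const_fun: "deriv (\<lambda>s. c) x = (0::real)"
  by (rule DERIV_imp_deriv) simp

lemma tau_par0:
  assumes "\<And>j. (j, i) \<in> G \<Longrightarrow> v $ j = 0"
  shows "tau i v z = (v $ i)\<^sup>2 / (\<sigma> i)\<^sup>2"
proof -
  have c: "f i (w + s *\<^sub>R v) = f i w" for w s by (rule dep_eq) (simp add: assms)
  have "d1 i v z = 0" unfolding d1_def c by (rule deriv_const_fun)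
  moreover have "dir2 (f i) v z = 0" unfolding dir2_def c deriv_const_fun by simp
  ultimately show ?thesis unfolding tau_def by simp
qed

lemma shift_eq:
  assumes "(j, i) \<notin> G"
  shows "f i (w + t *\<^sub>R axis j 1 + s *\<^sub>R v) = f i (w + s *\<^sub>R v)"
  by (rule dep_eq) (use assms in \<open>auto simp: axis_def\<close>)

lemma shift_d1: "(j, i) \<notin> G \<Longrightarrow> d1 i v (z + t *\<^sub>R axis j 1) = d1 i v z"
  unfolding d1_def using shift_eq[of j i z t] by simp

lemma shift_dir2: "(j, i) \<notin> G \<Longrightarrow> dir2 (f i) v (z + t *\<^sub>R axis j 1) = dir2 (f i) v z"
  unfolding dir2_def using shift_eq[of j i z t] by simp

lemma shift_f: "(j, i) \<notin> G \<Longrightarrow> f i (z + t *\<^sub>R axis j 1) = f i z"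
  using shift_eq[of j i z t 0] by simp

lemma tau_shift:
  assumes "(j, i) \<notin> G" "j \<noteq> i"
  shows "tau i v (z + t *\<^sub>R axis j 1) = tau i v z"
  unfolding tau_def shift_d1[OF assms(1)] shift_dir2[OF assms(1)] shift_f[OF assms(1)]
  using assms(2) by (simp add: axis_def)

lemma tau_self: "tau i v (z + t *\<^sub>R axis i 1) = tau i v z - t * dir2 (f i) v z / (\<sigma> i)\<^sup>2"
  unfolding tau_def shift_d1[OF irr] shift_dir2[OF irr] shift_f[OF irr]
  by (simp add: axis_def algebra_simps diff_divide_distrib add_divide_distrib)

lemma dnl_use:
  assumes z: "\<And>z. dir2 (f i) v z = 0"
  shows "\<And>j. (j, i) \<in> G \<Longrightarrow> v $ j = 0"
proof -
  define w where "w = (\<chi> j. if (j, i) \<in> G then v $ j else 0)"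
  have fw: "f i (z + s *\<^sub>R v) = f i (z + s *\<^sub>R w)" for z s
    by (rule dep_eq) (simp add: w_def)
  have wz: "dir2 (f i) w z = 0" for z using z[of z] unfolding dir2_def fw .
  have "w = 0"
  proof (rule ccontr)
    assume "w \<noteq> 0"
    define \<beta> where "\<beta> = (1 / norm w) *\<^sub>R w"
    have "norm \<beta> = 1" using \<open>w \<noteq> 0\<close> by (simp add: \<beta>_def)
    moreover have "\<forall>j. j \<notin> parents G i \<longrightarrow> \<beta> $ j = 0" by (simp add: \<beta>_def w_def parents_def)
    moreover have "\<forall>z. dir2 (f i) \<beta> z = 0"
    proof
      fix z
      have "dir2 (f i) \<beta> z = (1 / norm w) * ((1 / norm w) * (D2f i z) w w)"
        unfolding dir2_eq \<beta>_def by (simp add: blinfun.scaleR_right blinfun.scaleR_left)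
      also have "(D2f i z) w w = 0" using wz[of z] dir2_eq by simp
      finally show "dir2 (f i) \<beta> z = 0" by simp
    qed
    ultimately show False using dnl[of i] unfolding dir_nonlinear_def by blast
  qed
  then show "\<And>j. (j, i) \<in> G \<Longrightarrow> v $ j = 0" by (auto simp: w_def vec_eq_iff) metis
qed

lemma Vk_par: "v \<in> Vk k \<Longrightarrow> i \<in> S k \<Longrightarrow> (j, i) \<in> G \<Longrightarrow> v $ j = 0"
proof -
  assume v: "v \<in> Vk k" and i: "i \<in> S k" and e: "(j, i) \<in> G"
  have "lay G i < lay G j" by (rule lay_parent[OF ac e])
  then have "k < lay G j" using i by (simp add: S_def)
  then show "v $ j = 0" using v by (simp add: Vk_def)
qed

lemma cst_sup: "Vk k \<subseteq> cst (Qk k)"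
proof
  fix v assume v: "v \<in> Vk k"
  have "dir2 (Qk k) v z = (\<Sum>i\<in>S k. (v $ i)\<^sup>2 / (\<sigma> i)\<^sup>2)" for z
    unfolding dir2_Qk by (rule sum.cong[OF refl], rule tau_par0) (use Vk_par[OF v] in blast)
  then show "v \<in> cst (Qk k)" unfolding cst_def by blast
qed

lemma cst_sub: "cst (Qk k) \<subseteq> Vk k"
proof
  fix v assume "v \<in> cst (Qk k)"
  then obtain c where c: "\<And>z. (\<Sum>i\<in>S k. tau i v z) = c" unfolding cst_def dir2_Qk by blast
  have claim: "\<forall>i. lay G i = l \<longrightarrow> k \<le> l \<longrightarrow> (\<forall>j. (j, i) \<in> G \<longrightarrow> v $ j = 0)" for l
  proof (induction l rule: less_induct)
    case (less l)
    show ?case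
    proof (intro allI impI)
      fix i j assume li: "lay G i = l" and kl: "k \<le> l" and ji: "(j, i) \<in> G"
      have iS: "i \<in> S k" using li kl by (simp add: S_def)
      have "dir2 (f i) v z = 0" for z
      proof -
        let ?z = "z + 1 *\<^sub>R axis i 1"
        have oth: "tau c v ?z = tau c v z" if "c \<in> S k - {i}" for c
        proof (cases "(i, c) \<in> G")
          case True
          then have "lay G c < l" using lay_parent[OF ac True] li by simp
          moreover have "k \<le> lay G c" using that by (simp add: S_def)
          ultimately have "\<forall>j. (j, c) \<in> G \<longrightarrow> v $ j = 0" using less.IH by blast
          then show ?thesis using tau_par0 by metis
        next
          case False
          then show ?thesis using that by (intro tau_shift) auto
        qed
        have fin: "finite (S k)" by simp
        have "c = (\<Sum>c\<in>S k. tau c v ?z)" using c by simp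
        also have "\<dots> = tau i v ?z + (\<Sum>c\<in>S k - {i}. tau c v ?z)" by (rule sum.remove[OF fin iS])
        also have "(\<Sum>c\<in>S k - {i}. tau c v ?z) = (\<Sum>c\<in>S k - {i}. tau c v z)"
          using oth by (intro sum.cong) auto
        also have "tau i v ?z = tau i v z - dir2 (f i) v z / (\<sigma> i)\<^sup>2" using tau_self[of i v z 1] by simp
        finally have "c = tau i v z + (\<Sum>c\<in>S k - {i}. tau c v z) - dir2 (f i) v z / (\<sigma> i)\<^sup>2" by simp
        also have "tau i v z + (\<Sum>c\<in>S k - {i}. tau c v z) = c"
          using c[of z] sum.remove[OF fin iS, of "\<lambda>c. tau c v z"] by simp
        finally have "dir2 (f i) v z / (\<sigma> i)\<^sup>2 = 0" by simp
        then show ?thesis using sig[of i] by simp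
      qed
      then show "v $ j = 0" using dnl_use ji by blast
    qed
  qed
  show "v \<in> Vk k" unfolding Vk_def
  proof (intro CollectI allI impI)
    fix m assume "k < lay G m"
    then obtain l where l: "lay G m = Suc l" "k \<le> l" by (metis Suc_le_eq less_imp_Suc_add le_add1 add_Suc)
    obtain c where "(m, c) \<in> G" "lay G c = l" using lay_child[OF ac l(1)] by blast
    then show "v $ m = 0" using claim l(2) by blast
  qed
qed

lemma cst_eq: "cst (Qk k) = Vk k" using cst_sub cst_sup by blast

lemma S_split: "S k = S (Suc k) \<union> {i. lay G i = k}" and S_disj: "S (Suc k) \<inter> {i. lay G i = k} = {}"
  by (auto simp: S_def)

lemma Qk_shift:
  assumes u: "u \<in> Vk k"
  shows "Qk k (z + u) = Qk (Suc k) z + (\<Sum>i\<in>{i. lay G i = k}. (z $ i + u $ i - f i z)\<^sup>2 / (2 * (\<sigma> i)\<^sup>2))"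
proof -
  have fe: "f i (z + u) = f i z" if "i \<in> S k" for i
    by (rule dep_eq) (use Vk_par[OF u that] in simp)
  have ue: "u $ i = 0" if "i \<in> S (Suc k)" for i using u that by (simp add: Vk_def S_def)
  have "Qk k (z + u) = (\<Sum>i\<in>S (Suc k). ((z + u) $ i - f i (z + u))\<^sup>2 / (2 * (\<sigma> i)\<^sup>2))
       + (\<Sum>i\<in>{i. lay G i = k}. ((z + u) $ i - f i (z + u))\<^sup>2 / (2 * (\<sigma> i)\<^sup>2))"
    unfolding Qk_def S_split[of k] by (rule sum.union_disjoint) (auto simp: S_def)
  also have "(\<Sum>i\<in>S (Suc k). ((z + u) $ i - f i (z + u))\<^sup>2 / (2 * (\<sigma> i)\<^sup>2)) = Qk (Suc k) z"
    unfolding Qk_def by (rule sum.cong[OF refl]) (simp add: ue fe S_def)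
  also have "(\<Sum>i\<in>{i. lay G i = k}. ((z + u) $ i - f i (z + u))\<^sup>2 / (2 * (\<sigma> i)\<^sup>2))
      = (\<Sum>i\<in>{i. lay G i = k}. (z $ i + u $ i - f i z)\<^sup>2 / (2 * (\<sigma> i)\<^sup>2))"
    by (rule sum.cong[OF refl]) (simp add: fe S_def)
  finally show ?thesis .
qed

lemma Qk_min1: "u \<in> Vk k \<Longrightarrow> Qk (Suc k) z \<le> Qk k (z + u)"
  unfolding Qk_shift by (simp add: sum_nonneg)

lemma Qk_min2: "\<exists>u\<in>Vk k. Qk k (z + u) = Qk (Suc k) z"
proof
  define u where "u = (\<chi> i. if lay G i = k then f i z - z $ i else 0)"
  show "u \<in> Vk k" by (simp add: u_def Vk_def)
  show "Qk k (z + u) = Qk (Suc k) z"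
    unfolding Qk_shift[OF \<open>u \<in> Vk k\<close>] by (simp add: u_def)
qed

end




lemma DERIV_add_const_iff:
  "((\<lambda>s. g s + K) has_field_derivative D) (at x) \<longleftrightarrow> (g has_field_derivative D) (at x)"
proof
  assume "((\<lambda>s. g s + K) has_field_derivative D) (at x)"
  from DERIV_diff[OF this DERIV_const[of K]] show "(g has_field_derivative D) (at x)" by simp
next
  assume "(g has_field_derivative D) (at x)"
  from DERIV_add[OF this DERIV_const[of K]] show "((\<lambda>s. g s + K) has_field_derivative D) (at x)" by simp
qed

lemma deriv_add_const: "deriv (\<lambda>s. g s + K) = deriv g"
  unfolding deriv_def[abs_def] DERIV_add_const_iff ..

lemma dir2_transfer:
  fixes F F' :: "real^'n::finite \<Rightarrow> real" and B :: "real^'n^'n"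
  assumes "\<And>z. F z = F' (B *v z) + K"
  shows "dir2 F v z = dir2 F' (B *v v) (B *v z)"
proof -
  have "(\<lambda>s. F (z + s *\<^sub>R v)) = (\<lambda>s. F' (B *v z + s *\<^sub>R (B *v v)) + K)"
    using assms by (simp add: matrix_vector_right_distrib matrix_vector_mult_scaleR)
  then show ?thesis unfolding dir2_def by (simp add: deriv_add_const)
qed

context vm
begin

definition K1 where "K1 = (\<Prod>i\<in>UNIV. 1 / sqrt (2 * pi * (\<sigma> i)\<^sup>2))"

lemma K1_pos: "K1 > 0" unfolding K1_def using sig by (intro prod_pos) (simp add: pi_gt_zero power2_eq_square)

lemma qZ_exp: "qZ z = K1 * exp (- Qk 0 z)"
proof -
  have "qZ z = (\<Prod>i\<in>UNIV. 1 / sqrt (2 * pi * (\<sigma> i)\<^sup>2) * exp (- (z $ i - f i z)\<^sup>2 / (2 * (\<sigma> i)\<^sup>2)))"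
    unfolding qZ_def normal_density_def by simp
  also have "\<dots> = K1 * (\<Prod>i\<in>UNIV. exp (- (z $ i - f i z)\<^sup>2 / (2 * (\<sigma> i)\<^sup>2)))"
    unfolding K1_def by (rule prod.distrib)
  also have "(\<Prod>i\<in>UNIV. exp (- (z $ i - f i z)\<^sup>2 / (2 * (\<sigma> i)\<^sup>2))) = exp (\<Sum>i\<in>UNIV. - (z $ i - f i z)\<^sup>2 / (2 * (\<sigma> i)\<^sup>2))"
    by (simp add: exp_sum)
  also have "(\<Sum>i\<in>UNIV. - (z $ i - f i z)\<^sup>2 / (2 * (\<sigma> i)\<^sup>2)) = - Qk 0 z"
    unfolding Qk_def S_def by (simp add: sum_negf)
  finally show ?thesis .
qed

lemma axis_Vk: "axis j 1 \<in> Vk (lay G j)"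
  unfolding Vk_def by (auto simp: axis_def)

end

lemma mat_axis: "(A *v axis j 1) $ m = (A :: real^'n::finite^'k::finite) $ m $ j"
  by (simp add: matrix_vector_mult_def axis_def if_distrib cong: if_cong)

context vm2
begin

definition K where "K = ln M.K1 - ln M'.K1 - ln cB"

lemma Q0_rel: "M.Qk 0 z = M'.Qk 0 (B *v z) + K"
proof -
  have "M.K1 * exp (- M.Qk 0 z) = M'.K1 * exp (- M'.Qk 0 (B *v z)) * cB"
    using dens_rel[of z] by (simp add: M.qZ_exp M'.qZ_exp)
  then have "ln (M.K1 * exp (- M.Qk 0 z)) = ln (M'.K1 * exp (- M'.Qk 0 (B *v z)) * cB)" by simp
  then have "ln M.K1 - M.Qk 0 z = ln M'.K1 - M'.Qk 0 (B *v z) + ln cB"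
    using M.K1_pos M'.K1_pos cB_pos by (simp add: ln_mult)
  then show ?thesis unfolding K_def by simp
qed

lemma cst_transfer:
  assumes "\<And>z. F z = F' (B *v z) + K'"
  shows "v \<in> M.cst F \<longleftrightarrow> B *v v \<in> M'.cst F'"
proof -
  have d: "dir2 F v z = dir2 F' (B *v v) (B *v z)" for z by (rule dir2_transfer[where K=K' and F=F and F'=F' and B=B, OF assms])
  show ?thesis
  proof
    assume "v \<in> M.cst F"
    then obtain c where c: "\<And>z. dir2 F v z = c" unfolding M.cst_def by blast
    have "dir2 F' (B *v v) w = c" for w using c[of "A *v w"] d[of "A *v w"] by simp
    then show "B *v v \<in> M'.cst F'" unfolding M'.cst_def by blast
  next
    assume "B *v v \<in> M'.cst F'"
    then obtain c where c: "\<And>w. dir2 F' (B *v v) w = c" unfolding M'.cst_def by blast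
    then show "v \<in> M.cst F" unfolding M.cst_def using d by auto
  qed
qed

lemma Qk_rel: "M.Qk k z = M'.Qk k (B *v z) + K"
proof (induction k arbitrary: z)
  case 0
  then show ?case by (rule Q0_rel)
next
  case (Suc k)
  have V: "u \<in> M.Vk k \<longleftrightarrow> B *v u \<in> M'.Vk k" for u
    using cst_transfer[of "M.Qk k" "M'.Qk k" K u] Suc.IH by (simp add: M.cst_eq M'.cst_eq)
  show ?case
  proof (rule antisym)
    obtain u' where u': "u' \<in> M'.Vk k" "M'.Qk k (B *v z + u') = M'.Qk (Suc k) (B *v z)"
      using M'.Qk_min2 by blast
    have "A *v u' \<in> M.Vk k" using V u'(1) by simp
    then have "M.Qk (Suc k) z \<le> M.Qk k (z + A *v u')" by (rule M.Qk_min1)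
    also have "\<dots> = M'.Qk k (B *v z + u') + K" using Suc.IH by (simp add: matrix_vector_right_distrib)
    finally show "M.Qk (Suc k) z \<le> M'.Qk (Suc k) (B *v z) + K" using u'(2) by simp
  next
    obtain u where u: "u \<in> M.Vk k" "M.Qk k (z + u) = M.Qk (Suc k) z" using M.Qk_min2 by blast
    have "B *v u \<in> M'.Vk k" using V u(1) by simp
    then have "M'.Qk (Suc k) (B *v z) \<le> M'.Qk k (B *v z + B *v u)" by (rule M'.Qk_min1)
    also have "\<dots> = M.Qk k (z + u) - K" using Suc.IH[of "z + u"] by (simp add: matrix_vector_right_distrib)
    finally show "M'.Qk (Suc k) (B *v z) + K \<le> M.Qk (Suc k) z" using u(2) by simp
  qed
qed

lemma V_rel: "u \<in> M.Vk k \<longleftrightarrow> B *v u \<in> M'.Vk k"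
  using cst_transfer[of "M.Qk k" "M'.Qk k" K u] Qk_rel by (simp add: M.cst_eq M'.cst_eq)

lemma zeroA: "A $ m $ j \<noteq> 0 \<Longrightarrow> lay G m \<le> lay G' j"
proof (rule ccontr)
  assume nz: "A $ m $ j \<noteq> 0" and "\<not> lay G m \<le> lay G' j"
  then have lt: "lay G' j < lay G m" by simp
  have "B *v (A *v axis j 1) \<in> M'.Vk (lay G' j)" using M'.axis_Vk by simp
  then have "A *v axis j 1 \<in> M.Vk (lay G' j)" using V_rel by blast
  then have "(A *v axis j 1) $ m = 0" using lt by (simp add: M.Vk_def)
  then show False using nz by (simp add: mat_axis)
qed

lemma zeroB: "B $ j $ m \<noteq> 0 \<Longrightarrow> lay G' j \<le> lay G m"
proof (rule ccontr)
  assume nz: "B $ j $ m \<noteq> 0" and "\<not> lay G' j \<le> lay G m"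
  then have lt: "lay G m < lay G' j" by simp
  have "axis m 1 \<in> M.Vk (lay G m)" by (rule M.axis_Vk)
  then have "B *v axis m 1 \<in> M'.Vk (lay G m)" using V_rel by blast
  then have "(B *v axis m 1) $ j = 0" using lt by (simp add: M'.Vk_def)
  then show False using nz by (simp add: mat_axis)
qed

end




lemma det_nz_perm:
  fixes M :: "real^'n::finite^'n::_"
  assumes "det M \<noteq> 0"
  shows "\<exists>p. p permutes UNIV \<and> (\<forall>i. M $ i $ p i \<noteq> 0)"
proof (rule ccontr)
  assume "\<not> ?thesis"
  then have "\<forall>p\<in>{p. p permutes UNIV}. of_int (sign p) * (\<Prod>i\<in>UNIV. M $ i $ p i) = 0" by auto
  then have "det M = 0" unfolding det_def by (intro sum.neutral) simp
  then show False using assms by simp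
qed

lemma perm_pattern:
  fixes A B :: "real^'n::finite^'n::_" and r r' :: "'n \<Rightarrow> nat"
  assumes AB: "A ** B = mat 1"
    and zA: "\<And>m j. A $ m $ j \<noteq> 0 \<Longrightarrow> r m \<le> r' j"
    and zB: "\<And>j m. B $ j $ m \<noteq> 0 \<Longrightarrow> r' j \<le> r m"
  shows "\<exists>s. s permutes UNIV \<and> (\<forall>j. A $ (s j) $ j \<noteq> 0 \<and> r (s j) = r' j)"
proof -
  have "det A * det B = 1" using AB by (metis det_I det_mul)
  then have dA: "det A \<noteq> 0" and dB: "det B \<noteq> 0" by auto
  obtain p where p: "p permutes UNIV" "\<And>i. A $ i $ p i \<noteq> 0" using det_nz_perm[OF dA] by blast
  obtain q where q: "q permutes UNIV" "\<And>i. B $ i $ q i \<noteq> 0" using det_nz_perm[OF dB] by blast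
  define s where "s = inv p"
  have s: "s permutes UNIV" unfolding s_def using p(1) by (rule permutes_inv)
  have ps: "p (s j) = j" for j unfolding s_def using p(1) by (simp add: permutes_inverses(1))
  have As: "A $ (s j) $ j \<noteq> 0" for j using p(2)[of "s j"] ps by simp
  have le1: "r (s j) \<le> r' j" for j using zA[OF As[of j]] .
  have le2: "r' j \<le> r (q j)" for j using zB[OF q(2)[of j]] .
  have sumq: "(\<Sum>j\<in>UNIV. r (q j)) = (\<Sum>j\<in>UNIV. r j)"
    using q(1) by (intro sum.reindex_bij_betw[of q UNIV UNIV "\<lambda>j. r j"]) (auto intro: permutes_imp_bij)
  have sums: "(\<Sum>j\<in>UNIV. r (s j)) = (\<Sum>j\<in>UNIV. r j)"
    using s by (intro sum.reindex_bij_betw[of s UNIV UNIV "\<lambda>j. r j"]) (auto intro: permutes_imp_bij)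
  have eq: "r (s j) = r' j" for j
  proof (rule ccontr)
    assume "r (s j) \<noteq> r' j"
    then have "r (s j) < r' j" using le1[of j] by simp
    then have "(\<Sum>j\<in>UNIV. r (s j)) < (\<Sum>j\<in>UNIV. r' j)"
      by (intro sum_strict_mono_ex1) (use le1 in auto)
    moreover have "(\<Sum>j\<in>UNIV. r' j) \<le> (\<Sum>j\<in>UNIV. r (q j))" by (intro sum_mono le2)
    ultimately show False using sumq sums by simp
  qed
  show ?thesis using s As eq by blast
qed

lemma left_inv_exists:
  fixes H :: "real^'n::finite^'d::finite"
  assumes "rank H = CARD('n)"
  shows "\<exists>L. L ** H = mat 1"
  using assms matrix_nonfull_linear_equations_eq[of H] matrix_left_invertible_ker[of H] by metis

theorem theorem1:
  shows "\<exists>\<Phi> :: (real^'d) measure \<Rightarrow> real^'d \<Rightarrow> real^'n::finite.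
    \<forall>(H :: real^'n^'d) G f \<sigma>. valid_model H G f \<sigma> \<longrightarrow>
      (\<exists>\<pi> (C :: real^'n^'n).
         \<pi> permutes (UNIV :: 'n set) \<and>
         (\<forall>i. C $ i $ i \<noteq> 0) \<and>
         (\<forall>k i j. i \<in> layer G k \<and> j \<in> (\<Union>l<k. layer G l) \<longrightarrow> C $ i $ j = 0) \<and>
         (\<forall>z. \<Phi> (obs_dist H f \<sigma>) (H *v z) = (perm_matrix \<pi> ** C) *v z))"
proof -
  define sel where "sel = (\<lambda>p. SOME M :: (real^'n^'d) \<times> ('n \<times> 'n) set \<times> ('n \<Rightarrow> real^'n \<Rightarrow> real) \<times> ('n \<Rightarrow> real).
      valid_model (fst M) (fst (snd M)) (fst (snd (snd M))) (snd (snd (snd M))) \<and>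
      obs_dist (fst M) (fst (snd (snd M))) (snd (snd (snd M))) = p)"
  define \<Phi> where "\<Phi> = (\<lambda>p x. (SOME L. L ** fst (sel p) = mat 1) *v x)"
  show ?thesis
  proof (intro exI[of _ \<Phi>] allI impI)
    fix H' :: "real^'n^'d" and G' f' \<sigma>'
    assume v': "valid_model H' G' f' \<sigma>'"
    define p where "p = obs_dist H' f' \<sigma>'"
    define H where "H = fst (sel p)"
    define G where "G = fst (snd (sel p))"
    define f where "f = fst (snd (snd (sel p)))"
    define \<sigma> where "\<sigma> = snd (snd (snd (sel p)))"
    have "\<exists>M :: (real^'n^'d) \<times> ('n \<times> 'n) set \<times> ('n \<Rightarrow> real^'n \<Rightarrow> real) \<times> ('n \<Rightarrow> real).
      valid_model (fst M) (fst (snd M)) (fst (snd (snd M))) (snd (snd (snd M))) \<and>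
      obs_dist (fst M) (fst (snd (snd M))) (snd (snd (snd M))) = p"
      using v' by (intro exI[of _ "(H', G', f', \<sigma>')"]) (simp add: p_def)
    then have "valid_model (fst (sel p)) (fst (snd (sel p))) (fst (snd (snd (sel p)))) (snd (snd (snd (sel p)))) \<and>
      obs_dist (fst (sel p)) (fst (snd (snd (sel p)))) (snd (snd (snd (sel p)))) = p"
      unfolding sel_def by (rule someI_ex)
    then have v: "valid_model H G f \<sigma>" and same: "obs_dist H f \<sigma> = obs_dist H' f' \<sigma>'"
      unfolding H_def G_def f_def \<sigma>_def p_def by auto
    define L where "L = (SOME L. L ** H = mat 1)"
    have "\<exists>L. L ** H = mat 1" using v unfolding valid_model_def by (intro left_inv_exists) simp
    then have L: "L ** H = mat 1" unfolding L_def by (rule someI_ex)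
    interpret vm2 H G f \<sigma> H' G' f' \<sigma>' L
      by unfold_locales (simp_all add: v v' same L)
    obtain s where s0: "s permutes UNIV" "\<forall>j. A $ (s j) $ j \<noteq> 0 \<and> lay G (s j) = lay G' j"
      using perm_pattern[where r="lay G" and r'="lay G'", OF AB zeroA zeroB] by blast
    then have s: "s permutes UNIV" "\<And>j. A $ (s j) $ j \<noteq> 0" "\<And>j. lay G (s j) = lay G' j" by auto
    define C where "C = (\<chi> k j. A $ (s k) $ j)"
    define \<pi> where "\<pi> = inv s"
    have \<pi>: "\<pi> permutes UNIV" unfolding \<pi>_def by (rule permutes_inv[OF s(1)])
    have s\<pi>: "s (\<pi> i) = i" for i unfolding \<pi>_def using s(1) by (simp add: permutes_inverses(1))
    have "(perm_matrix \<pi> ** C) $ i $ j = A $ i $ j" for i j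
    proof -
      have "(perm_matrix \<pi> ** C) $ i $ j = (\<Sum>k\<in>UNIV. (if k = \<pi> i then 1 else 0) * A $ (s k) $ j)"
        by (simp add: matrix_matrix_mult_def perm_matrix_def C_def)
      also have "\<dots> = (\<Sum>k\<in>UNIV. if k = \<pi> i then A $ (s k) $ j else 0)"
        by (rule sum.cong) auto
      also have "\<dots> = A $ (s (\<pi> i)) $ j" by simp
      finally show ?thesis by (simp add: s\<pi>)
    qed
    then have PC: "perm_matrix \<pi> ** C = A" by (simp add: vec_eq_iff)
    show "\<exists>\<pi> (C :: real^'n^'n).
         \<pi> permutes (UNIV :: 'n set) \<and>
         (\<forall>i. C $ i $ i \<noteq> 0) \<and>
         (\<forall>k i j. i \<in> layer G' k \<and> j \<in> (\<Union>l<k. layer G' l) \<longrightarrow> C $ i $ j = 0) \<and>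
         (\<forall>z. \<Phi> (obs_dist H' f' \<sigma>') (H' *v z) = (perm_matrix \<pi> ** C) *v z)"
    proof (intro exI[of _ \<pi>] exI[of _ C] conjI allI impI)
      show "\<pi> permutes UNIV" by (rule \<pi>)
      show "C $ i $ i \<noteq> 0" for i using s(2) by (simp add: C_def)
      show "C $ i $ j = 0" if asm: "i \<in> layer G' k \<and> j \<in> (\<Union>l<k. layer G' l)" for k i j
      proof -
        have li: "lay G' i = k" using asm in_layer_iff[OF M'.ac] by blast
        obtain l where "l < k" "j \<in> layer G' l" using asm by blast
        then have lj: "lay G' j < k" using in_layer_iff[OF M'.ac, of j l] by simp
        have "lay G (s i) = k" using s(3) li by simp
        then have "\<not> lay G (s i) \<le> lay G' j" using lj by simp
        then have "A $ (s i) $ j = 0" using zeroA by blast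
        then show ?thesis by (simp add: C_def)
      qed
      show "\<Phi> (obs_dist H' f' \<sigma>') (H' *v z) = (perm_matrix \<pi> ** C) *v z" for z
      proof -
        have "\<Phi> (obs_dist H' f' \<sigma>') (H' *v z) = L *v (H' *v z)"
          unfolding \<Phi>_def p_def[symmetric] H_def[symmetric] L_def by simp
        also have "\<dots> = A *v z" by (simp add: A_def matrix_vector_mul_assoc)
        finally show ?thesis by (simp add: PC)
      qed
    qed
  qed
qed



end
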